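(* Let $X^n=(X[1],\dots,X[n])$ be any random sequence in $\{0,1\}^n$ and, for $t=1,\dots,n$, let $G_T[t]=(G_1[t],G_2[t],G_3[t])$ be i.i.d. over $t$ and independent of $X^n$, with $G_i[t]\sim\mathcal{B}(p_i)$, $i=1,2,3$, where $0\le p_2\le p_1\le 1$, $p_1>0$, and $\Pr[G_i[t]=1,G_j[t]=1]=0$ for all $i\ne j$ in $\{1,2,3\}$. Let $Y_i[t]=G_i[t]X[t]$ for $i=1,2$. Then $$H\left(Y_2^n \mid G_3^n X^n, G_T^n\right) \ge \frac{p_2}{p_1} H\left(Y_1^n \mid G_3^n X^n, G_T^n\right),$$ where $G_3^nX^n$ denotes the sequence $(G_3[1]X[1],\dots,G_3[n]X[n])$ and $G_T^n=(G_T[1],\dots,G_T[n])$.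
   Context: This is a binary fading broadcast channel from one transmitter to two receivers with no CSIT, meaning that the transmit sequence $X^n$ (with any input distribution) is independent of the channel gains. $\mathcal{B}(p)$ denotes the Bernoulli distribution taking value 1 with probability $p$. $H$ denotes Shannon entropy. *)

theory Defs
  imports "HOL-Probability.Probability"
begin

definition cond_entropy :: "'w pmf \<Rightarrow> ('w \<Rightarrow> 'y) \<Rightarrow> ('w \<Rightarrow> 'z) \<Rightarrow> real" where
  "cond_entropy D f g =
     (let J = map_pmf (\<lambda>w. (f w, g w)) D; M = map_pmf g D in
      - (\<Sum>yz\<in>set_pmf J. pmf J yz * log 2 (pmf J yz / pmf M (snd yz))))"

type_synonym gain = "bool \<times> bool \<times> bool"

definition G1 :: "gain \<Rightarrow> bool" where "G1 g = fst g"
definition G2 :: "gain \<Rightarrow> bool" where "G2 g = fst (snd g)"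
definition G3 :: "gain \<Rightarrow> bool" where "G3 g = snd (snd g)"

text \<open>Channel output sequence G_i[t] X[t], t = 1..n (bits; product = conjunction).\<close>
definition out_seq :: "(gain \<Rightarrow> bool) \<Rightarrow> bool list \<Rightarrow> gain list \<Rightarrow> bool list" where
  "out_seq Gi xs gs = map2 (\<lambda>x g. Gi g \<and> x) xs gs"

end

theory Submission
  imports Defs
begin


definition ent :: "'w pmf \<Rightarrow> ('w \<Rightarrow> 'y) \<Rightarrow> real" where
 "ent P f = - measure_pmf.expectation P (\<lambda>w. log 2 (pmf (map_pmf f P) (f w)))"

lemma pmf_map_pos: "w \<in> set_pmf P \<Longrightarrow> pmf (map_pmf f P) (f w) > 0"
  by (simp add: pmf_positive_iff)

lemma ent_comp: "ent (map_pmf F P) k = ent P (\<lambda>w. k (F w))"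
  unfolding ent_def by (simp add: map_pmf_comp o_def)

lemma ent_inv:
  assumes "\<And>x y. x\<in>set_pmf P \<Longrightarrow> y \<in> set_pmf P \<Longrightarrow> f x = f y \<longleftrightarrow> g x = g y"
  shows "ent P f = ent P g"
proof -
  have "pmf (map_pmf f P) (f w) = pmf (map_pmf g P) (g w)" if "w \<in> set_pmf P" for w
  proof -
    have "f -` {f w} \<inter> set_pmf P = g -` {g w} \<inter> set_pmf P" using assms that by auto
    then show ?thesis by (metis pmf_map measure_Int_set_pmf)
  qed
  then show ?thesis unfolding ent_def
    by (intro arg_cong[where f=uminus] integral_cong_AE) (auto simp: AE_measure_pmf_iff)
qed

lemma cond_entropy_ent:
  assumes fin: "finite (set_pmf D)"
  shows "cond_entropy D f g = ent D (\<lambda>w. (f w, g w)) - ent D g"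
proof -
  define J where "J = map_pmf (\<lambda>w. (f w, g w)) D"
  define M where "M = map_pmf g D"
  have finJ: "finite (set_pmf J)" using fin by (simp add: J_def)
  have "(\<Sum>yz\<in>set_pmf J. pmf J yz * log 2 (pmf J yz / pmf M (snd yz)))
      = measure_pmf.expectation J (\<lambda>yz. log 2 (pmf J yz / pmf M (snd yz)))"
    by (subst integral_measure_pmf_real[OF finJ]) (auto simp: mult.commute)
  also have "\<dots> = measure_pmf.expectation D (\<lambda>w. log 2 (pmf J (f w, g w) / pmf M (g w)))"
    by (simp add: J_def)
  also have "\<dots> = measure_pmf.expectation D (\<lambda>w. log 2 (pmf J (f w, g w)) - log 2 (pmf M (g w)))"
  proof (intro integral_cong_AE)
    show "AE w in D. log 2 (pmf J (f w, g w) / pmf M (g w)) = log 2 (pmf J (f w, g w)) - log 2 (pmf M (g w))"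
      unfolding AE_measure_pmf_iff
    proof
      fix w assume w: "w \<in> set_pmf D"
      have "pmf J (f w, g w) > 0" unfolding J_def using pmf_map_pos[OF w, of "\<lambda>w. (f w, g w)"] by simp
      moreover have "pmf M (g w) > 0" unfolding M_def using pmf_map_pos[OF w, of g] by simp
      ultimately show "log 2 (pmf J (f w, g w) / pmf M (g w)) = log 2 (pmf J (f w, g w)) - log 2 (pmf M (g w))"
        by (simp add: log_divide)
    qed
  qed auto
  also have "\<dots> = measure_pmf.expectation D (\<lambda>w. log 2 (pmf J (f w, g w))) - measure_pmf.expectation D (\<lambda>w. log 2 (pmf M (g w)))"
    by (intro Bochner_Integration.integral_diff integrable_measure_pmf_finite fin)
  finally show ?thesis unfolding cond_entropy_def Let_def ent_def J_def[symmetric] M_def[symmetric]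
    by simp
qed



lemma pmf_map_fin: "finite (set_pmf p) \<Longrightarrow> pmf (map_pmf f p) y = (\<Sum>x\<in>{x\<in>set_pmf p. f x = y}. pmf p x)"
proof -
  assume fin: "finite (set_pmf p)"
  have "pmf (map_pmf f p) y = measure p (f -` {y} \<inter> set_pmf p)" by (simp add: pmf_map measure_Int_set_pmf)
  also have "f -` {y} \<inter> set_pmf p = {x\<in>set_pmf p. f x = y}" by auto
  also have "measure p \<dots> = (\<Sum>x\<in>{x\<in>set_pmf p. f x = y}. pmf p x)"
    using fin by (intro measure_measure_pmf_finite) auto
  finally show ?thesis .
qed

lemma expect_pair:
  fixes h :: "'a \<times> 'b \<Rightarrow> real"
  assumes fP: "finite (set_pmf P)" and fQ: "finite (set_pmf Q)"
  shows "measure_pmf.expectation (pair_pmf P Q) h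
       = measure_pmf.expectation Q (\<lambda>g. measure_pmf.expectation P (\<lambda>x. h (x, g)))"
proof -
  have "measure_pmf.expectation (pair_pmf P Q) h = (\<Sum>w\<in>set_pmf P \<times> set_pmf Q. h w * pmf (pair_pmf P Q) w)"
    using fP fQ by (intro integral_measure_pmf_real) auto
  also have "\<dots> = (\<Sum>x\<in>set_pmf P. \<Sum>g\<in>set_pmf Q. h (x,g) * (pmf P x * pmf Q g))"
    by (simp add: sum.cartesian_product split_beta pmf_pair[symmetric])
  also have "\<dots> = (\<Sum>g\<in>set_pmf Q. (\<Sum>x\<in>set_pmf P. h (x,g) * pmf P x) * pmf Q g)"
    by (subst sum.swap) (simp add: sum_distrib_right mult.assoc)
  also have "\<dots> = measure_pmf.expectation Q (\<lambda>g. measure_pmf.expectation P (\<lambda>x. h (x, g)))"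
    using fP fQ by (subst integral_measure_pmf_real[of "set_pmf Q"]) (auto simp: integral_measure_pmf_real)
  finally show ?thesis .
qed

lemma ent_pair:
  assumes fP: "finite (set_pmf P)" and fQ: "finite (set_pmf Q)"
  shows "ent (pair_pmf P Q) (\<lambda>w. (F (fst w) (snd w), snd w))
       = ent Q (\<lambda>g. g) + measure_pmf.expectation Q (\<lambda>g. ent P (\<lambda>x. F x g))"
proof -
  let ?h = "\<lambda>w. (F (fst w) (snd w), snd w)"
  have pm: "pmf (map_pmf ?h (pair_pmf P Q)) (F x g, g) = pmf (map_pmf (\<lambda>x'. F x' g) P) (F x g) * pmf Q g"
    if g: "g \<in> set_pmf Q" for x g
  proof -
    have fPQ: "finite (set_pmf (pair_pmf P Q))" using fP fQ by simp
    have "{w\<in>set_pmf (pair_pmf P Q). ?h w = (F x g, g)} = {x'\<in>set_pmf P. F x' g = F x g} \<times> {g}"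
      using g by auto
    then have "pmf (map_pmf ?h (pair_pmf P Q)) (F x g, g) = (\<Sum>w\<in>{x'\<in>set_pmf P. F x' g = F x g} \<times> {g}. pmf (pair_pmf P Q) w)"
      using pmf_map_fin[OF fPQ, of ?h] by simp
    also have "{x'\<in>set_pmf P. F x' g = F x g} \<times> {g} = (\<lambda>x'. (x', g)) ` {x'\<in>set_pmf P. F x' g = F x g}" by auto
    also have "(\<Sum>w\<in>(\<lambda>x'. (x', g)) ` {x'\<in>set_pmf P. F x' g = F x g}. pmf (pair_pmf P Q) w) = (\<Sum>x'\<in>{x'\<in>set_pmf P. F x' g = F x g}. pmf P x') * pmf Q g"
      by (subst sum.reindex) (auto simp: inj_on_def pmf_pair sum_distrib_right)
    finally show ?thesis using pmf_map_fin[OF fP, of "\<lambda>x'. F x' g"] by simp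
  qed
  have "ent (pair_pmf P Q) ?h = - measure_pmf.expectation (pair_pmf P Q)
        (\<lambda>w. log 2 (pmf (map_pmf (\<lambda>x'. F x' (snd w)) P) (F (fst w) (snd w))) + log 2 (pmf Q (snd w)))"
    unfolding ent_def
  proof (intro arg_cong[where f=uminus] integral_cong_AE)
    show "AE w in pair_pmf P Q. log 2 (pmf (map_pmf ?h (pair_pmf P Q)) (?h w)) =
         log 2 (pmf (map_pmf (\<lambda>x'. F x' (snd w)) P) (F (fst w) (snd w))) + log 2 (pmf Q (snd w))"
      unfolding AE_measure_pmf_iff
    proof
      fix w assume w: "w \<in> set_pmf (pair_pmf P Q)"
      obtain x g where wxg: "w = (x,g)" and x: "x \<in> set_pmf P" and g: "g \<in> set_pmf Q" using w by auto
      have a: "pmf (map_pmf (\<lambda>x'. F x' g) P) (F x g) > 0" using pmf_map_pos[OF x, of "\<lambda>x'. F x' g"] by simp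
      have b: "pmf Q g > 0" using g by (simp add: pmf_positive_iff)
      show "log 2 (pmf (map_pmf ?h (pair_pmf P Q)) (?h w)) =
         log 2 (pmf (map_pmf (\<lambda>x'. F x' (snd w)) P) (F (fst w) (snd w))) + log 2 (pmf Q (snd w))"
        using pm[OF g, of x] a b by (simp add: wxg log_mult)
    qed
  qed auto
  also have "\<dots> = - measure_pmf.expectation Q (\<lambda>g. measure_pmf.expectation P (\<lambda>x.
          log 2 (pmf (map_pmf (\<lambda>x'. F x' g) P) (F x g)) + log 2 (pmf Q g)))"
    by (subst expect_pair[OF fP fQ]) simp
  also have "\<dots> = - measure_pmf.expectation Q (\<lambda>g. measure_pmf.expectation P (\<lambda>x.
          log 2 (pmf (map_pmf (\<lambda>x'. F x' g) P) (F x g))) + log 2 (pmf Q g))"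
    by (subst Bochner_Integration.integral_add) (auto intro!: integrable_measure_pmf_finite fP)
  also have "\<dots> = - measure_pmf.expectation Q (\<lambda>g. measure_pmf.expectation P (\<lambda>x.
          log 2 (pmf (map_pmf (\<lambda>x'. F x' g) P) (F x g)))) - measure_pmf.expectation Q (\<lambda>g. log 2 (pmf Q g))"
    by (subst Bochner_Integration.integral_add) (auto intro!: integrable_measure_pmf_finite fQ)
  also have "\<dots> = ent Q (\<lambda>g. g) + measure_pmf.expectation Q (\<lambda>g. ent P (\<lambda>x. F x g))"
    unfolding ent_def by (simp add: map_pmf_ident)
  finally show ?thesis .
qed



lemma marg_sum:
  assumes fin: "finite (set_pmf K)" and fA: "finite A" and sub: "fst ` set_pmf K \<subseteq> A"
  shows "(\<Sum>a\<in>A. pmf K (a, c)) = pmf (map_pmf snd K) c"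
proof -
  have "(\<Sum>a\<in>A. pmf K (a, c)) = (\<Sum>x\<in>(\<lambda>a. (a,c)) ` A. pmf K x)"
    by (subst sum.reindex) (auto simp: inj_on_def)
  also have "\<dots> = (\<Sum>x\<in>{x\<in>set_pmf K. snd x = c}. pmf K x)"
  proof (rule sum.mono_neutral_right)
    show "finite ((\<lambda>a. (a, c)) ` A)" using fA by simp
    show "{x \<in> set_pmf K. snd x = c} \<subseteq> (\<lambda>a. (a, c)) ` A"
      using sub by (auto simp: image_iff)
    show "\<forall>i\<in>(\<lambda>a. (a, c)) ` A - {x \<in> set_pmf K. snd x = c}. pmf K i = 0"
      by (auto simp: set_pmf_eq)
  qed
  also have "\<dots> = pmf (map_pmf snd K) c" using pmf_map_fin[OF fin, of snd c] by simp
  finally show ?thesis .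
qed

lemma submod_J:
  fixes J :: "('a \<times> 'b \<times> 'c) pmf"
  assumes fin: "finite (set_pmf J)"
  shows "ent J (\<lambda>t. t) + ent J (\<lambda>t. snd (snd t))
       \<le> ent J (\<lambda>t. (fst t, snd (snd t))) + ent J (\<lambda>t. (fst (snd t), snd (snd t)))"
proof -
  define K1 where "K1 = map_pmf (\<lambda>t. (fst t, snd (snd t))) J"
  define K2 where "K2 = map_pmf (\<lambda>t. (fst (snd t), snd (snd t))) J"
  define K3 where "K3 = map_pmf (\<lambda>t. snd (snd t)) J"
  define u where "u t = pmf K1 (fst t, snd (snd t)) * pmf K2 (fst (snd t), snd (snd t)) / (pmf J t * pmf K3 (snd (snd t)))" for t
  have pos1: "pmf K1 (fst t, snd (snd t)) > 0" if "t \<in> set_pmf J" for t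
    unfolding K1_def using pmf_map_pos[OF that, of "\<lambda>t. (fst t, snd (snd t))"] by simp
  have pos2: "pmf K2 (fst (snd t), snd (snd t)) > 0" if "t \<in> set_pmf J" for t
    unfolding K2_def using pmf_map_pos[OF that, of "\<lambda>t. (fst (snd t), snd (snd t))"] by simp
  have pos3: "pmf K3 (snd (snd t)) > 0" if "t \<in> set_pmf J" for t
    unfolding K3_def using pmf_map_pos[OF that, of "\<lambda>t. snd (snd t)"] by simp
  have pos0: "pmf J t > 0" if "t \<in> set_pmf J" for t using that by (simp add: pmf_positive_iff)
  have int: "integrable J f" for f :: "_ \<Rightarrow> real" by (rule integrable_measure_pmf_finite[OF fin])
  have L: "ent J (\<lambda>t. t) + ent J (\<lambda>t. snd (snd t)) - ent J (\<lambda>t. (fst t, snd (snd t))) - ent J (\<lambda>t. (fst (snd t), snd (snd t)))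
     = measure_pmf.expectation J (\<lambda>t. log 2 (pmf K1 (fst t, snd (snd t))) + log 2 (pmf K2 (fst (snd t), snd (snd t)))
          - log 2 (pmf J t) - log 2 (pmf K3 (snd (snd t))))"
    unfolding ent_def K1_def K2_def K3_def using int by (simp add: map_pmf_ident)
  also have "\<dots> = measure_pmf.expectation J (\<lambda>t. log 2 (u t))"
  proof (intro integral_cong_AE)
    show "AE t in J. log 2 (pmf K1 (fst t, snd (snd t))) + log 2 (pmf K2 (fst (snd t), snd (snd t))) -
          log 2 (pmf J t) - log 2 (pmf K3 (snd (snd t))) = log 2 (u t)"
      unfolding AE_measure_pmf_iff
    proof
      fix t assume t: "t \<in> set_pmf J"
      show "log 2 (pmf K1 (fst t, snd (snd t))) + log 2 (pmf K2 (fst (snd t), snd (snd t))) -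
          log 2 (pmf J t) - log 2 (pmf K3 (snd (snd t))) = log 2 (u t)"
        using pos0[OF t] pos1[OF t] pos2[OF t] pos3[OF t]
        by (simp add: u_def log_mult log_divide)
    qed
  qed auto
  also have "\<dots> \<le> measure_pmf.expectation J (\<lambda>t. (u t - 1) / ln 2)"
  proof (intro integral_mono_AE int)
    show "AE t in J. log 2 (u t) \<le> (u t - 1) / ln 2"
      unfolding AE_measure_pmf_iff
    proof
      fix t assume t: "t \<in> set_pmf J"
      have "u t > 0" using pos0[OF t] pos1[OF t] pos2[OF t] pos3[OF t] by (simp add: u_def)
      then have "ln (u t) \<le> u t - 1" by (rule ln_le_minus_one)
      then show "log 2 (u t) \<le> (u t - 1) / ln 2"
        by (simp add: log_def divide_right_mono)
    qed
  qed
  also have "\<dots> = (measure_pmf.expectation J u - 1) / ln 2"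
    using int by simp
  also have "\<dots> \<le> 0"
  proof -
    define A where "A = fst ` set_pmf J"
    define B where "B = (\<lambda>t. fst (snd t)) ` set_pmf J"
    define C where "C = (\<lambda>t. snd (snd t)) ` set_pmf J"
    have fA: "finite A" and fB: "finite B" and fC: "finite C" using fin by (auto simp: A_def B_def C_def)
    have "measure_pmf.expectation J u = (\<Sum>t\<in>set_pmf J. u t * pmf J t)"
      by (rule integral_measure_pmf_real[OF fin]) auto
    also have "\<dots> = (\<Sum>t\<in>set_pmf J. pmf K1 (fst t, snd (snd t)) * pmf K2 (fst (snd t), snd (snd t)) / pmf K3 (snd (snd t)))"
    proof (intro sum.cong refl)
      fix t assume t: "t \<in> set_pmf J"
      have "pmf J t \<noteq> 0" using pos0[OF t] by linarith
      then show "u t * pmf J t = pmf K1 (fst t, snd (snd t)) * pmf K2 (fst (snd t), snd (snd t)) / pmf K3 (snd (snd t))"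
        by (simp add: u_def)
    qed
    also have "\<dots> \<le> (\<Sum>t\<in>A \<times> B \<times> C. pmf K1 (fst t, snd (snd t)) * pmf K2 (fst (snd t), snd (snd t)) / pmf K3 (snd (snd t)))"
    proof (intro sum_mono2)
      show "finite (A \<times> B \<times> C)" using fA fB fC by simp
      show "set_pmf J \<subseteq> A \<times> B \<times> C" unfolding A_def B_def C_def by (force simp: image_iff)
    qed (auto)
    also have "\<dots> = (\<Sum>a\<in>A. \<Sum>b\<in>B. \<Sum>c\<in>C. pmf K1 (a, c) * pmf K2 (b, c) / pmf K3 c)"
      by (simp add: sum.cartesian_product split_beta)
    also have "\<dots> = (\<Sum>c\<in>C. (\<Sum>a\<in>A. pmf K1 (a, c)) * (\<Sum>b\<in>B. pmf K2 (b, c)) / pmf K3 c)"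
    proof -
      have "(\<Sum>a\<in>A. \<Sum>b\<in>B. \<Sum>c\<in>C. pmf K1 (a, c) * pmf K2 (b, c) / pmf K3 c)
          = (\<Sum>c\<in>C. \<Sum>a\<in>A. \<Sum>b\<in>B. pmf K1 (a, c) * pmf K2 (b, c) / pmf K3 c)"
        by (subst sum.swap, subst (2) sum.swap) (rule refl)
      also have "\<dots> = (\<Sum>c\<in>C. (\<Sum>a\<in>A. pmf K1 (a, c)) * (\<Sum>b\<in>B. pmf K2 (b, c)) / pmf K3 c)"
        by (simp only: sum_product sum_divide_distrib)
      finally show ?thesis .
    qed
    also have "\<dots> = (\<Sum>c\<in>C. pmf K3 c * pmf K3 c / pmf K3 c)"
    proof (intro sum.cong refl)
      fix c assume "c \<in> C"
      have "(\<Sum>a\<in>A. pmf K1 (a, c)) = pmf (map_pmf snd K1) c"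
      proof (rule marg_sum[OF _ fA])
        show "finite (set_pmf K1)" using fin by (simp add: K1_def)
        show "fst ` set_pmf K1 \<subseteq> A" unfolding K1_def A_def by (auto simp: image_iff; force)
      qed
      moreover have "(\<Sum>b\<in>B. pmf K2 (b, c)) = pmf (map_pmf snd K2) c"
      proof (rule marg_sum[OF _ fB])
        show "finite (set_pmf K2)" using fin by (simp add: K2_def)
        show "fst ` set_pmf K2 \<subseteq> B" unfolding K2_def B_def by (auto simp: image_iff; force)
      qed
      moreover have "map_pmf snd K1 = K3" "map_pmf snd K2 = K3"
        by (simp_all add: K1_def K2_def K3_def map_pmf_comp)
      ultimately show "(\<Sum>a\<in>A. pmf K1 (a, c)) * (\<Sum>b\<in>B. pmf K2 (b, c)) / pmf K3 c = pmf K3 c * pmf K3 c / pmf K3 c"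
        by simp
    qed
    also have "\<dots> = (\<Sum>c\<in>C. pmf K3 c)"
      by (intro sum.cong refl) (auto simp: C_def K3_def intro: pmf_map_pos[THEN less_imp_neq, THEN not_sym])
    also have "\<dots> = 1"
      by (rule sum_pmf_eq_1) (use fin in \<open>auto simp: C_def K3_def\<close>)
    finally have "measure_pmf.expectation J u \<le> 1" .
    then show ?thesis by (simp add: divide_nonpos_pos)
  qed
  finally show ?thesis by simp
qed

lemma submod:
  assumes fin: "finite (set_pmf P)"
  shows "ent P (\<lambda>w. (f w, g w, h w)) + ent P h \<le> ent P (\<lambda>w. (f w, h w)) + ent P (\<lambda>w. (g w, h w))"
  using submod_J[of "map_pmf (\<lambda>w. (f w, g w, h w)) P"] fin by (simp add: ent_comp)



lemma rep_map: "map_pmf (map h) (replicate_pmf n p) = replicate_pmf n (map_pmf h p)"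
proof (induction n)
  case (Suc n) then show ?case by (simp add: Suc.IH[symmetric] map_bind_pmf bind_map_pmf)
qed simp

lemma rep_zip: "map_pmf (\<lambda>(xs,ys). zip xs ys) (pair_pmf (replicate_pmf n P) (replicate_pmf n Q))
   = replicate_pmf n (pair_pmf P Q)"
proof (induction n)
  case 0 then show ?case by (simp add: pair_return_pmf)
next
  case (Suc n)
  have "replicate_pmf (Suc n) (pair_pmf P Q) = bind_pmf P (\<lambda>x. bind_pmf Q (\<lambda>y.
      bind_pmf (replicate_pmf n P) (\<lambda>xs. bind_pmf (replicate_pmf n Q) (\<lambda>ys. return_pmf ((x,y) # zip xs ys)))))"
    apply (simp only: replicate_pmf.simps Suc.IH[symmetric])
    apply (simp add: pair_pmf_def bind_assoc_pmf bind_return_pmf map_bind_pmf bind_map_pmf split_beta)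
    done
  also have "\<dots> = bind_pmf P (\<lambda>x. bind_pmf (replicate_pmf n P) (\<lambda>xs. bind_pmf Q (\<lambda>y.
      bind_pmf (replicate_pmf n Q) (\<lambda>ys. return_pmf ((x,y) # zip xs ys)))))"
    by (subst bind_commute_pmf) (rule refl)
  also have "\<dots> = map_pmf (\<lambda>(xs,ys). zip xs ys) (pair_pmf (replicate_pmf (Suc n) P) (replicate_pmf (Suc n) Q))"
    by (simp add: pair_pmf_def bind_assoc_pmf bind_return_pmf map_bind_pmf bind_map_pmf)
  finally show ?case by simp
qed

lemma rep_nth: "j < n \<Longrightarrow> map_pmf (\<lambda>cs. cs ! j) (replicate_pmf n B) = B"
proof (induction n arbitrary: j)
  case 0 then show ?case by simp
next
  case (Suc n)
  show ?case
  proof (cases j)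
    case 0 then show ?thesis by (simp add: map_bind_pmf map_return_pmf bind_return_pmf')
  next
    case (Suc k)
    then have "k < n" using Suc.prems by simp
    have "map_pmf (\<lambda>cs. cs ! j) (replicate_pmf (Suc n) B) = bind_pmf B (\<lambda>x. map_pmf (\<lambda>cs. cs ! k) (replicate_pmf n B))"
      by (simp add: Suc map_pmf_def bind_assoc_pmf bind_return_pmf)
    also have "\<dots> = B" using Suc.IH[OF \<open>k < n\<close>] by simp
    finally show ?thesis .
  qed
qed

lemma pmf_map_UNIV: "pmf (map_pmf f (p :: 'a::finite pmf)) y = (\<Sum>x\<in>UNIV. if f x = y then pmf p x else 0)"
  by (simp add: pmf_map measure_measure_pmf_finite sum.If_cases vimage_def Collect_conv_if)

lemma sum_gain: "(\<Sum>x\<in>(UNIV::gain set). f x) = f (False,False,False) + f (False,False,True) + f (False,True,False)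
  + f (False,True,True) + f (True,False,False) + f (True,False,True) + f (True,True,False) + f (True,True,True)"
  by (simp add: UNIV_Times_UNIV[symmetric] sum.cartesian_product[symmetric] UNIV_bool add.assoc)



lemma meas_UNIV: "measure (measure_pmf (p :: 'a::finite pmf)) A = (\<Sum>x\<in>UNIV. if x \<in> A then pmf p x else 0)"
  by (simp add: measure_measure_pmf_finite sum.If_cases)

lemma sum_bb: "(\<Sum>x\<in>(UNIV::((bool \<times> bool) \<times> bool) set). f x) = f ((False,False),False) + f ((False,False),True)
  + f ((False,True),False) + f ((False,True),True) + f ((True,False),False) + f ((True,False),True)
  + f ((True,True),False) + f ((True,True),True)"
  by (simp add: UNIV_Times_UNIV[symmetric] sum.cartesian_product[symmetric] UNIV_bool add.assoc)

lemma coupling: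
  fixes PG :: "gain pmf" and p1 p2 p3 :: real
  assumes p: "0 \<le> p2" "p2 \<le> p1" "p1 \<le> 1" "p1 > 0" "0 \<le> p3" "p3 \<le> 1"
    and m1: "map_pmf G1 PG = bernoulli_pmf p1"
    and m2: "map_pmf G2 PG = bernoulli_pmf p2"
    and m3: "map_pmf G3 PG = bernoulli_pmf p3"
    and d12: "measure_pmf.prob PG {g. G1 g \<and> G2 g} = 0"
    and d13: "measure_pmf.prob PG {g. G1 g \<and> G3 g} = 0"
    and d23: "measure_pmf.prob PG {g. G2 g \<and> G3 g} = 0"
  shows "map_pmf (\<lambda>\<gamma>. (G2 \<gamma>, G3 \<gamma>)) PG
       = map_pmf (\<lambda>(\<beta>,c). (fst \<beta> \<and> c, snd \<beta>)) (pair_pmf (map_pmf (\<lambda>\<gamma>. (G1 \<gamma>, G3 \<gamma>)) PG) (bernoulli_pmf (p2/p1)))"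
proof -
  define q where "q = pmf PG"
  have qn: "\<And>x. q x \<ge> 0" by (simp add: q_def)
  have r: "0 \<le> p2/p1" "p2/p1 \<le> 1" using p by auto
  have h1: "pmf (map_pmf G1 PG) True = p1" using m1 p by simp
  have h2: "pmf (map_pmf G2 PG) True = p2" using m2 p by simp
  have h3: "pmf (map_pmf G3 PG) True = p3" using m3 p by simp
  have tot: "(\<Sum>x\<in>UNIV. q x) = 1" unfolding q_def by (rule sum_pmf_eq_1) auto
  note e1 = h1[unfolded pmf_map_UNIV sum_gain, folded q_def]
  note e2 = h2[unfolded pmf_map_UNIV sum_gain, folded q_def]
  note e3 = h3[unfolded pmf_map_UNIV sum_gain, folded q_def]
  note f12 = d12[unfolded meas_UNIV sum_gain, folded q_def]
  note f13 = d13[unfolded meas_UNIV sum_gain, folded q_def]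
  note f23 = d23[unfolded meas_UNIV sum_gain, folded q_def]
  note t = tot[unfolded sum_gain]
  have g12: "q (True,True,False) + q (True,True,True) = 0" using f12 by (simp add: G1_def G2_def)
  have g13: "q (True,False,True) + q (True,True,True) = 0" using f13 by (simp add: G1_def G3_def)
  have g23: "q (False,True,True) + q (True,True,True) = 0" using f23 by (simp add: G2_def G3_def)
  have z: "q (True,True,False) = 0" "q (True,True,True) = 0" "q (True,False,True) = 0" "q (False,True,True) = 0"
    using g12 g13 g23 qn[of "(True,True,False)"] qn[of "(True,True,True)"] qn[of "(True,False,True)"] qn[of "(False,True,True)"]
    by linarith+
  have pr: "p1 * (p2 / p1) = p2" using p by simp
  show ?thesis
  proof (rule pmf_eqI)
    fix ab :: "bool \<times> bool"
    obtain a b where ab: "ab = (a,b)" by (cases ab)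
    show "pmf (map_pmf (\<lambda>\<gamma>. (G2 \<gamma>, G3 \<gamma>)) PG) ab =
          pmf (map_pmf (\<lambda>(\<beta>,c). (fst \<beta> \<and> c, snd \<beta>)) (pair_pmf (map_pmf (\<lambda>\<gamma>. (G1 \<gamma>, G3 \<gamma>)) PG) (bernoulli_pmf (p2/p1)))) ab"
      unfolding ab pmf_map_UNIV[of _ "pair_pmf _ _"] sum_bb pmf_pair
      unfolding pmf_map_UNIV sum_gain q_def[symmetric]
      using e1 e2 e3 t z r pr p by (cases a; cases b) (simp_all add: G1_def G2_def G3_def algebra_simps)
  qed
qed



definition xmask :: "nat set \<Rightarrow> bool list \<Rightarrow> nat \<Rightarrow> bool" where "xmask S x = (\<lambda>t. t \<in> S \<and> x ! t)"

lemma xmask_eq: "xmask S x = xmask S y \<longleftrightarrow> (\<forall>t\<in>S. x!t = y!t)"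
  by (auto simp: xmask_def fun_eq_iff)

definition Hm :: "bool list pmf \<Rightarrow> nat set \<Rightarrow> real" where "Hm PX S = ent PX (xmask S)"

lemma Hm_submod:
  assumes fin: "finite (set_pmf PX)"
  shows "Hm PX (X \<union> Y) + Hm PX (X \<inter> Y) \<le> Hm PX X + Hm PX Y"
proof -
  have 1: "ent PX (\<lambda>w. (xmask (X-Y) w, xmask (Y-X) w, xmask (X\<inter>Y) w)) = Hm PX (X\<union>Y)"
    unfolding Hm_def by (rule ent_inv) (simp add: xmask_eq, blast)
  have 2: "ent PX (\<lambda>w. (xmask (X-Y) w, xmask (X\<inter>Y) w)) = Hm PX X"
    unfolding Hm_def by (rule ent_inv) (simp add: xmask_eq, blast)
  have 3: "ent PX (\<lambda>w. (xmask (Y-X) w, xmask (X\<inter>Y) w)) = Hm PX Y"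
    unfolding Hm_def by (rule ent_inv) (simp add: xmask_eq, blast)
  show ?thesis using submod[OF fin, of "xmask (X-Y)" "xmask (Y-X)" "xmask (X\<inter>Y)"] 1 2 3
    by (simp add: Hm_def)
qed

lemma chain_T:
  fixes h :: "nat set \<Rightarrow> real"
  assumes sm: "\<And>X Y. h (X \<union> Y) + h (X \<inter> Y) \<le> h X + h Y" and TS: "T \<subseteq> S"
  shows "h (A \<union> T \<inter> {..<k}) - h A \<ge> (\<Sum>j<k. if j \<in> T then h (A \<union> S \<inter> {..<Suc j}) - h (A \<union> S \<inter> {..<j}) else 0)"
proof (induction k)
  case 0 then show ?case by simp
next
  case (Suc k)
  have inc: "h (A \<union> T \<inter> {..<Suc k}) - h (A \<union> T \<inter> {..<k}) \<ge>
       (if k \<in> T then h (A \<union> S \<inter> {..<Suc k}) - h (A \<union> S \<inter> {..<k}) else 0)"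
  proof (cases "k \<in> T")
    case True
    have u: "(A \<union> T \<inter> {..<Suc k}) \<union> (A \<union> S \<inter> {..<k}) = A \<union> S \<inter> {..<Suc k}"
      using TS True by (auto simp: lessThan_Suc)
    have i: "(A \<union> T \<inter> {..<Suc k}) \<inter> (A \<union> S \<inter> {..<k}) = A \<union> T \<inter> {..<k}"
      using TS True by (auto simp: lessThan_Suc)
    show ?thesis using sm[of "A \<union> T \<inter> {..<Suc k}" "A \<union> S \<inter> {..<k}"] True unfolding u i by simp
  next
    case False
    then have "T \<inter> {..<Suc k} = T \<inter> {..<k}" by (auto simp: lessThan_Suc)
    then show ?thesis using False by simp
  qed
  show ?case using Suc.IH inc by simp
qed

lemma chain_S:
  fixes h :: "nat set \<Rightarrow> real"
  shows "h (A \<union> S \<inter> {..<k}) - h A = (\<Sum>j<k. h (A \<union> S \<inter> {..<Suc j}) - h (A \<union> S \<inter> {..<j}))"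
  using sum_lessThan_telescope[of "\<lambda>i. h (A \<union> S \<inter> {..<i})" k] by simp

definition Sf :: "(bool \<times> bool) list \<Rightarrow> nat set" where "Sf bs = {t. t < length bs \<and> fst (bs ! t)}"
definition Ss :: "(bool \<times> bool) list \<Rightarrow> nat set" where "Ss bs = {t. t < length bs \<and> snd (bs ! t)}"
definition Phi :: "bool list pmf \<Rightarrow> (bool \<times> bool) list \<Rightarrow> real" where
  "Phi PX bs = Hm PX (Sf bs \<union> Ss bs) - Hm PX (Ss bs)"
definition ainc :: "bool list pmf \<Rightarrow> (bool \<times> bool) list \<Rightarrow> nat \<Rightarrow> real" where
  "ainc PX bs j = Hm PX (Ss bs \<union> Sf bs \<inter> {..<Suc j}) - Hm PX (Ss bs \<union> Sf bs \<inter> {..<j})"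

lemma Phi_sum: "length bs = n \<Longrightarrow> Phi PX bs = (\<Sum>j<n. ainc PX bs j)"
proof -
  assume l: "length bs = n"
  have "Sf bs \<inter> {..<n} = Sf bs" using l by (auto simp: Sf_def)
  then show ?thesis using chain_S[of "Hm PX" "Ss bs" "Sf bs" n] unfolding Phi_def ainc_def
    by (simp add: Un_commute)
qed

definition psi :: "(bool \<times> bool) \<times> bool \<Rightarrow> bool \<times> bool" where "psi z = (fst (fst z) \<and> snd z, snd (fst z))"

lemma Phi_coupled:
  assumes fin: "finite (set_pmf PX)" and l: "length bs = n" "length cs = n"
  shows "Phi PX (map psi (zip bs cs)) \<ge> (\<Sum>j<n. if cs ! j then ainc PX bs j else 0)"
proof -
  define T where "T = {t \<in> Sf bs. cs ! t}"
  have sf: "Sf (map psi (zip bs cs)) = T" using l by (auto simp: Sf_def T_def psi_def)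
  have ss: "Ss (map psi (zip bs cs)) = Ss bs" using l by (auto simp: Ss_def psi_def)
  have TS: "T \<subseteq> Sf bs" by (auto simp: T_def)
  have Tn: "T \<inter> {..<n} = T" using l by (auto simp: T_def Sf_def)
  have c: "(\<Sum>j<n. if j \<in> T then Hm PX (Ss bs \<union> Sf bs \<inter> {..<Suc j}) - Hm PX (Ss bs \<union> Sf bs \<inter> {..<j}) else 0)
         = (\<Sum>j<n. if cs ! j then ainc PX bs j else 0)"
  proof (intro sum.cong refl)
    fix j assume "j \<in> {..<n}"
    show "(if j \<in> T then Hm PX (Ss bs \<union> Sf bs \<inter> {..<Suc j}) - Hm PX (Ss bs \<union> Sf bs \<inter> {..<j}) else 0)
         = (if cs ! j then ainc PX bs j else 0)"
    proof (cases "j \<in> Sf bs")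
      case True then show ?thesis by (simp add: T_def ainc_def)
    next
      case False
      then have "Sf bs \<inter> {..<Suc j} = Sf bs \<inter> {..<j}" by (auto simp: lessThan_Suc)
      then show ?thesis using False by (simp add: T_def ainc_def)
    qed
  qed
  have "Phi PX (map psi (zip bs cs)) = Hm PX (Ss bs \<union> T \<inter> {..<n}) - Hm PX (Ss bs)"
    unfolding Phi_def sf ss Tn by (simp add: Un_commute)
  then show ?thesis using chain_T[of "Hm PX" T "Sf bs" "Ss bs" n] Hm_submod[OF fin] TS c by simp
qed



lemma fin_lists: "finite {xs :: 'a::finite list. length xs = n}"
  using finite_lists_length_eq[of "UNIV :: 'a set" n] by simp

lemma fin_rep: "finite (set_pmf (replicate_pmf n (p :: 'a::finite pmf)))"
  by (rule finite_subset[OF _ fin_lists[of n]]) (auto simp: set_replicate_pmf)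

lemma out_eq:
  assumes "length x = length g" "length y = length g"
  shows "(out_seq Gi x g = out_seq Gi y g) \<longleftrightarrow> (\<forall>t. t < length g \<and> Gi (g!t) \<longrightarrow> x!t = y!t)"
  using assms by (auto simp: out_seq_def list_eq_iff_nth_eq)

definition Sg :: "(gain \<Rightarrow> bool) \<Rightarrow> gain list \<Rightarrow> nat set" where "Sg Gi g = {t. t < length g \<and> Gi (g ! t)}"

lemma cond_Phi:
  fixes n :: nat and PX :: "bool list pmf" and PG :: "gain pmf" and Gi :: "gain \<Rightarrow> bool"
  assumes len: "\<And>xs. xs \<in> set_pmf PX \<Longrightarrow> length xs = n"
  shows "cond_entropy (pair_pmf PX (replicate_pmf n PG)) (\<lambda>(xs, gs). out_seq Gi xs gs) (\<lambda>(xs, gs). (out_seq G3 xs gs, gs))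
     = measure_pmf.expectation (replicate_pmf n (map_pmf (\<lambda>\<gamma>. (Gi \<gamma>, G3 \<gamma>)) PG)) (Phi PX)"
proof -
  define Q where "Q = replicate_pmf n PG"
  have finPX: "finite (set_pmf PX)" using len by (intro finite_subset[OF _ fin_lists[of n]]) auto
  have finQ: "finite (set_pmf Q)" unfolding Q_def by (rule fin_rep)
  have lenQ: "length g = n" if "g \<in> set_pmf Q" for g using that by (simp add: Q_def set_replicate_pmf)
  define D where "D = pair_pmf PX Q"
  have finD: "finite (set_pmf D)" using finPX finQ by (simp add: D_def)
  have e1: "ent D (\<lambda>w. ((\<lambda>(xs, gs). out_seq Gi xs gs) w, (\<lambda>(xs, gs). (out_seq G3 xs gs, gs)) w))
      = ent D (\<lambda>w. (xmask (Sg Gi (snd w) \<union> Sg G3 (snd w)) (fst w), snd w))"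
  proof (rule ent_inv)
    fix w w' assume w: "w \<in> set_pmf D" and w': "w' \<in> set_pmf D"
    obtain x g where wx: "w = (x,g)" "x \<in> set_pmf PX" "g \<in> set_pmf Q" using w by (auto simp: D_def)
    obtain x' g' where wx': "w' = (x',g')" "x' \<in> set_pmf PX" "g' \<in> set_pmf Q" using w' by (auto simp: D_def)
    have l: "length x = length g" "length x' = length g" if "g' = g"
      using len wx wx' lenQ that by auto
    show "((\<lambda>(xs, gs). out_seq Gi xs gs) w, (\<lambda>(xs, gs). (out_seq G3 xs gs, gs)) w) =
          ((\<lambda>(xs, gs). out_seq Gi xs gs) w', (\<lambda>(xs, gs). (out_seq G3 xs gs, gs)) w') \<longleftrightarrow>
          (xmask (Sg Gi (snd w) \<union> Sg G3 (snd w)) (fst w), snd w) = (xmask (Sg Gi (snd w') \<union> Sg G3 (snd w')) (fst w'), snd w')"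
      using l by (cases "g' = g") (auto simp: wx wx' out_eq xmask_eq Sg_def)
  qed
  have e2: "ent D (\<lambda>(xs, gs). (out_seq G3 xs gs, gs)) = ent D (\<lambda>w. (xmask (Sg G3 (snd w)) (fst w), snd w))"
  proof (rule ent_inv)
    fix w w' assume w: "w \<in> set_pmf D" and w': "w' \<in> set_pmf D"
    obtain x g where wx: "w = (x,g)" "x \<in> set_pmf PX" "g \<in> set_pmf Q" using w by (auto simp: D_def)
    obtain x' g' where wx': "w' = (x',g')" "x' \<in> set_pmf PX" "g' \<in> set_pmf Q" using w' by (auto simp: D_def)
    have l: "length x = length g" "length x' = length g" if "g' = g"
      using len wx wx' lenQ that by auto
    show "(\<lambda>(xs, gs). (out_seq G3 xs gs, gs)) w = (\<lambda>(xs, gs). (out_seq G3 xs gs, gs)) w' \<longleftrightarrow>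
          (xmask (Sg G3 (snd w)) (fst w), snd w) = (xmask (Sg G3 (snd w')) (fst w'), snd w')"
      using l by (cases "g' = g") (auto simp: wx wx' out_eq xmask_eq Sg_def)
  qed
  have "cond_entropy D (\<lambda>(xs, gs). out_seq Gi xs gs) (\<lambda>(xs, gs). (out_seq G3 xs gs, gs))
     = ent D (\<lambda>w. (xmask (Sg Gi (snd w) \<union> Sg G3 (snd w)) (fst w), snd w)) - ent D (\<lambda>w. (xmask (Sg G3 (snd w)) (fst w), snd w))"
    unfolding cond_entropy_ent[OF finD] e1 e2 by (rule refl)
  also have "\<dots> = measure_pmf.expectation Q (\<lambda>g. Hm PX (Sg Gi g \<union> Sg G3 g)) - measure_pmf.expectation Q (\<lambda>g. Hm PX (Sg G3 g))"
    unfolding D_def using ent_pair[OF finPX finQ, of "\<lambda>x g. xmask (Sg Gi g \<union> Sg G3 g) x"]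
      ent_pair[OF finPX finQ, of "\<lambda>x g. xmask (Sg G3 g) x"] by (simp add: Hm_def)
  also have "\<dots> = measure_pmf.expectation Q (\<lambda>g. Hm PX (Sg Gi g \<union> Sg G3 g) - Hm PX (Sg G3 g))"
    by (rule Bochner_Integration.integral_diff[symmetric]) (auto intro: integrable_measure_pmf_finite finQ)
  also have "\<dots> = measure_pmf.expectation Q (\<lambda>g. Phi PX (map (\<lambda>\<gamma>. (Gi \<gamma>, G3 \<gamma>)) g))"
  proof -
    have sf: "Sf (map (\<lambda>\<gamma>. (Gi \<gamma>, G3 \<gamma>)) g) = Sg Gi g" for g by (auto simp: Sf_def Sg_def)
    have ss: "Ss (map (\<lambda>\<gamma>. (Gi \<gamma>, G3 \<gamma>)) g) = Sg G3 g" for g by (auto simp: Ss_def Sg_def)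
    show ?thesis by (simp add: Phi_def sf ss)
  qed
  also have "\<dots> = measure_pmf.expectation (replicate_pmf n (map_pmf (\<lambda>\<gamma>. (Gi \<gamma>, G3 \<gamma>)) PG)) (Phi PX)"
    by (simp add: Q_def rep_map[symmetric])
  finally show ?thesis by (simp add: D_def Q_def)
qed



lemma exp_bern: "0 \<le> r \<Longrightarrow> r \<le> 1 \<Longrightarrow> measure_pmf.expectation (bernoulli_pmf r) (\<lambda>b. of_bool b :: real) = r"
  by (subst integral_measure_pmf_real[of UNIV]) (auto simp: UNIV_bool)

theorem lemma1:
  fixes n :: nat and PX :: "bool list pmf" and PG :: "gain pmf" and p1 p2 p3 :: real
  assumes len: "\<And>xs. xs \<in> set_pmf PX \<Longrightarrow> length xs = n"
    and p: "0 \<le> p2" "p2 \<le> p1" "p1 \<le> 1" "p1 > 0" "0 \<le> p3" "p3 \<le> 1"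
    and m1: "map_pmf G1 PG = bernoulli_pmf p1"
    and m2: "map_pmf G2 PG = bernoulli_pmf p2"
    and m3: "map_pmf G3 PG = bernoulli_pmf p3"
    and d12: "measure_pmf.prob PG {g. G1 g \<and> G2 g} = 0"
    and d13: "measure_pmf.prob PG {g. G1 g \<and> G3 g} = 0"
    and d23: "measure_pmf.prob PG {g. G2 g \<and> G3 g} = 0"
  defines "D \<equiv> pair_pmf PX (replicate_pmf n PG)"
  shows "cond_entropy D (\<lambda>(xs, gs). out_seq G2 xs gs)
                        (\<lambda>(xs, gs). (out_seq G3 xs gs, gs))
         \<ge> p2 / p1 * cond_entropy D (\<lambda>(xs, gs). out_seq G1 xs gs)
                        (\<lambda>(xs, gs). (out_seq G3 xs gs, gs))"
proof -
  have ob: "\<And>c x. (of_bool c * x :: real) = (if c then x else 0)" by simp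
  define r where "r = p2 / p1"
  have r: "0 \<le> r" "r \<le> 1" using p by (auto simp: r_def)
  define \<mu>1 where "\<mu>1 = map_pmf (\<lambda>\<gamma>. (G1 \<gamma>, G3 \<gamma>)) PG"
  define B where "B = bernoulli_pmf r"
  define P1 where "P1 = replicate_pmf n \<mu>1"
  define PB where "PB = replicate_pmf n B"
  have finPX: "finite (set_pmf PX)" using len by (intro finite_subset[OF _ fin_lists[of n]]) auto
  have fin1: "finite (set_pmf P1)" unfolding P1_def by (rule fin_rep)
  have finB: "finite (set_pmf PB)" unfolding PB_def by (rule fin_rep)
  have l1: "length bs = n" if "bs \<in> set_pmf P1" for bs using that by (simp add: P1_def set_replicate_pmf)
  have lB: "length cs = n" if "cs \<in> set_pmf PB" for cs using that by (simp add: PB_def set_replicate_pmf)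
  have psi_eq: "(\<lambda>(\<beta>,c). (fst \<beta> \<and> c, snd \<beta>)) = psi" by (auto simp: psi_def fun_eq_iff)
  have cp: "map_pmf (\<lambda>\<gamma>. (G2 \<gamma>, G3 \<gamma>)) PG = map_pmf psi (pair_pmf \<mu>1 B)"
    using coupling[OF p m1 m2 m3 d12 d13 d23] unfolding psi_eq \<mu>1_def B_def r_def .
  have c2: "cond_entropy D (\<lambda>(xs, gs). out_seq G2 xs gs) (\<lambda>(xs, gs). (out_seq G3 xs gs, gs))
      = measure_pmf.expectation (pair_pmf P1 PB) (\<lambda>w. Phi PX (map psi (zip (fst w) (snd w))))"
  proof -
    have "cond_entropy D (\<lambda>(xs, gs). out_seq G2 xs gs) (\<lambda>(xs, gs). (out_seq G3 xs gs, gs))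
      = measure_pmf.expectation (replicate_pmf n (map_pmf (\<lambda>\<gamma>. (G2 \<gamma>, G3 \<gamma>)) PG)) (Phi PX)"
      unfolding D_def by (rule cond_Phi[OF len])
    also have "\<dots> = measure_pmf.expectation (pair_pmf P1 PB) (\<lambda>w. Phi PX (map psi (zip (fst w) (snd w))))"
      unfolding cp rep_map[symmetric] rep_zip[symmetric] P1_def PB_def
      by (simp add: split_beta)
    finally show ?thesis .
  qed
  have c1: "cond_entropy D (\<lambda>(xs, gs). out_seq G1 xs gs) (\<lambda>(xs, gs). (out_seq G3 xs gs, gs))
      = measure_pmf.expectation P1 (Phi PX)"
    unfolding D_def P1_def \<mu>1_def by (rule cond_Phi[OF len])
  have "measure_pmf.expectation (pair_pmf P1 PB) (\<lambda>w. Phi PX (map psi (zip (fst w) (snd w))))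
      \<ge> measure_pmf.expectation (pair_pmf P1 PB) (\<lambda>w. \<Sum>j<n. of_bool (snd w ! j) * ainc PX (fst w) j)"
  proof (intro integral_mono_AE integrable_measure_pmf_finite)
    show "finite (set_pmf (pair_pmf P1 PB))" using fin1 finB by simp
    show "finite (set_pmf (pair_pmf P1 PB))" using fin1 finB by simp
    show "AE w in pair_pmf P1 PB. (\<Sum>j<n. of_bool (snd w ! j) * ainc PX (fst w) j) \<le> Phi PX (map psi (zip (fst w) (snd w)))"
      unfolding AE_measure_pmf_iff
    proof
      fix w assume "w \<in> set_pmf (pair_pmf P1 PB)"
      then have "length (fst w) = n" "length (snd w) = n" using l1 lB by auto
      from Phi_coupled[OF finPX this] show "(\<Sum>j<n. of_bool (snd w ! j) * ainc PX (fst w) j) \<le> Phi PX (map psi (zip (fst w) (snd w)))"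
        by (simp add: ob)
    qed
  qed
  also have "measure_pmf.expectation (pair_pmf P1 PB) (\<lambda>w. \<Sum>j<n. of_bool (snd w ! j) * ainc PX (fst w) j)
      = measure_pmf.expectation PB (\<lambda>cs. \<Sum>j<n. of_bool (cs ! j) * measure_pmf.expectation P1 (\<lambda>bs. ainc PX bs j))"
    using fin1 finB by (simp add: expect_pair integrable_measure_pmf_finite)
  also have "\<dots> = (\<Sum>j<n. measure_pmf.expectation PB (\<lambda>cs. of_bool (cs ! j)) * measure_pmf.expectation P1 (\<lambda>bs. ainc PX bs j))"
    by (simp only: Bochner_Integration.integral_sum[OF integrable_measure_pmf_finite[OF finB]] integral_mult_left_zero)
  also have "\<dots> = (\<Sum>j<n. r * measure_pmf.expectation P1 (\<lambda>bs. ainc PX bs j))"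
  proof (intro sum.cong refl)
    fix j assume "j \<in> {..<n}"
    then have "map_pmf (\<lambda>cs. cs ! j) PB = B" unfolding PB_def by (intro rep_nth) simp
    then have "measure_pmf.expectation PB (\<lambda>cs. of_bool (cs ! j)) = measure_pmf.expectation B (\<lambda>b. of_bool b :: real)"
      by (metis (no_types) integral_map_pmf)
    then show "measure_pmf.expectation PB (\<lambda>cs. of_bool (cs ! j)) * measure_pmf.expectation P1 (\<lambda>bs. ainc PX bs j)
        = r * measure_pmf.expectation P1 (\<lambda>bs. ainc PX bs j)"
      using exp_bern[OF r] by (simp add: B_def)
  qed
  also have "\<dots> = r * measure_pmf.expectation P1 (Phi PX)"
  proof -
    have "measure_pmf.expectation P1 (Phi PX) = measure_pmf.expectation P1 (\<lambda>bs. \<Sum>j<n. ainc PX bs j)"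
      by (intro integral_cong_AE) (auto simp: AE_measure_pmf_iff Phi_sum l1)
    also have "\<dots> = (\<Sum>j<n. measure_pmf.expectation P1 (\<lambda>bs. ainc PX bs j))"
      using fin1 by (simp add: integrable_measure_pmf_finite)
    finally show ?thesis by (simp add: sum_distrib_left)
  qed
  finally show ?thesis unfolding c1 c2 r_def by simp
qed


end
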